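(* For all $n\ge1$ and all $k_1,\dots,k_n\in\mathbb N$, $H_{k_1}\circ\cdots\circ H_{k_n}(\partial\Delta)$ is the boundary of a triangle each of whose sides has negative slope.
   Context: $\Delta=\{(u,v)\in\mathbb R^2:u\ge0,v\ge0,u+v\le1\}$. For $k\in\mathbb N$, $H_k:\Delta\to\Delta$ is $H_k(u,v)=\frac{1}{k(1-v)+1-u}(v,1-v)$ (a projective map, sending line segments to line segments). A vertical side is regarded as having slope $-\infty$, which counts as negative. *)

theory Defs
  imports "HOL-Analysis.Analysis"
begin

definition Delta :: "(real \<times> real) set" where
  "Delta = {(u, v). u \<ge> 0 \<and> v \<ge> 0 \<and> u + v \<le> 1}"

definition H :: "nat \<Rightarrow> real \<times> real \<Rightarrow> real \<times> real" where
  "H k p = (let (u, v) = p; d = real k * (1 - v) + 1 - u in (v / d, (1 - v) / d))"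

definition Hcomp :: "nat list \<Rightarrow> real \<times> real \<Rightarrow> real \<times> real" where
  "Hcomp ks = foldr (\<lambda>k f. H k \<circ> f) ks id"

(* the side from p to q has negative slope; a vertical side has slope -infinity, counted negative *)
definition neg_slope :: "real \<times> real \<Rightarrow> real \<times> real \<Rightarrow> bool" where
  "neg_slope p q = (if fst p = fst q then snd p \<noteq> snd q
                    else (snd q - snd p) / (fst q - fst p) < 0)"

definition neg_slope_triangle_boundary :: "(real \<times> real) set \<Rightarrow> bool" where
  "neg_slope_triangle_boundary S = (\<exists>a b c. \<not> collinear {a, b, c} \<and>
      S = closed_segment a b \<union> closed_segment b c \<union> closed_segment c a \<and>
      neg_slope a b \<and> neg_slope b c \<and> neg_slope c a)"

end

theory Submission
  imports Defs
begin

lemma H_eq: "H k (u, v) = (v / (real k * (1 - v) + 1 - u), (1 - v) / (real k * (1 - v) + 1 - u))"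
  by (simp add: H_def Let_def)

lemma d_pos:
  assumes "(u, v) \<in> Delta" "k \<ge> 1"
  shows "real k * (1 - v) + 1 - u \<ge> 1"
proof -
  have "real k * (1 - v) \<ge> 1 * (1 - v)"
    using assms by (intro mult_right_mono) (auto simp: Delta_def)
  then show ?thesis using assms by (auto simp: Delta_def)
qed

lemma H_Delta:
  assumes "p \<in> Delta" "k \<ge> 1"
  shows "H k p \<in> Delta"
proof -
  obtain u v where p: "p = (u, v)" by force
  define d where "d = real k * (1 - v) + 1 - u"
  have d: "d \<ge> 1" using d_pos assms p d_def by blast
  have uv: "u \<ge> 0" "v \<ge> 0" "u + v \<le> 1" using assms p by (auto simp: Delta_def)
  have "v / d + (1 - v) / d = 1 / d" using d by (simp add: field_simps)
  also have "\<dots> \<le> 1" using d by simp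
  finally show ?thesis using p d uv by (simp add: H_eq d_def[symmetric] Delta_def)
qed

lemma Hcomp_Cons: "Hcomp (k # ks) = H k \<circ> Hcomp ks"
  by (simp add: Hcomp_def)

lemma Hcomp_Nil: "Hcomp [] = id"
  by (simp add: Hcomp_def)

lemma Hcomp_Delta:
  assumes "\<forall>k\<in>set ks. k \<ge> 1" "p \<in> Delta"
  shows "Hcomp ks p \<in> Delta"
  using assms by (induction ks) (auto simp: Hcomp_Cons Hcomp_Nil H_Delta)

lemma H_inj:
  assumes "p \<in> Delta" "q \<in> Delta" "k \<ge> 1" "H k p = H k q"
  shows "p = q"
proof -
  obtain u v where p: "p = (u, v)" by force
  obtain u' v' where q: "q = (u', v')" by force
  define d where "d = real k * (1 - v) + 1 - u"
  define d' where "d' = real k * (1 - v') + 1 - u'"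
  have d: "d \<ge> 1" using d_pos assms p d_def by blast
  have d': "d' \<ge> 1" using d_pos assms q d'_def by blast
  have e1: "v / d = v' / d'" and e2: "(1 - v) / d = (1 - v') / d'"
    using assms(4) p q by (auto simp: H_eq d_def[symmetric] d'_def[symmetric])
  have "v / d + (1 - v) / d = v' / d' + (1 - v') / d'" using e1 e2 by simp
  then have "1 / d = 1 / d'" using d d' by (simp add: field_simps)
  then have dd: "d = d'" using d d' by (simp add: field_simps)
  then have "v = v'" using e1 d by (simp add: field_simps)
  then have "u = u'" using dd d_def d'_def by simp
  then show ?thesis using p q \<open>v = v'\<close> by simp
qed

definition cross :: "real \<times> real \<Rightarrow> real \<times> real \<Rightarrow> real \<times> real \<Rightarrow> real" where
  "cross a b c = (fst b - fst a) * (snd c - snd a) - (snd b - snd a) * (fst c - fst a)"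

lemma cross_H:
  assumes "a \<in> Delta" "b \<in> Delta" "c \<in> Delta" "k \<ge> 1" "cross a b c \<noteq> 0"
  shows "cross (H k a) (H k b) (H k c) \<noteq> 0"
proof -
  obtain a1 a2 where a: "a = (a1, a2)" by force
  obtain b1 b2 where b: "b = (b1, b2)" by force
  obtain c1 c2 where c: "c = (c1, c2)" by force
  define da where "da = real k * (1 - a2) + 1 - a1"
  define db where "db = real k * (1 - b2) + 1 - b1"
  define dc where "dc = real k * (1 - c2) + 1 - c1"
  have da: "da \<ge> 1" using d_pos assms a da_def by blast
  have db: "db \<ge> 1" using d_pos assms b db_def by blast
  have dc: "dc \<ge> 1" using d_pos assms c dc_def by blast
  have X: "((b2/db - a2/da) * ((1-c2)/dc - (1-a2)/da) - ((1-b2)/db - (1-a2)/da) * (c2/dc - a2/da)) * (da*db*dc)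
     = - (((real k*(1-b2)+1-db) - (real k*(1-a2)+1-da)) * (c2 - a2) - (b2 - a2) * ((real k*(1-c2)+1-dc) - (real k*(1-a2)+1-da)))"
    using da db dc by (simp add: field_simps)
  have "cross (H k a) (H k b) (H k c) * (da * db * dc) = - cross a b c"
    using X unfolding a b c H_eq cross_def da_def[symmetric] db_def[symmetric] dc_def[symmetric]
    by (simp add: da_def db_def dc_def)
  then show ?thesis using assms(5) by (metis mult_zero_left neg_equal_0_iff_equal)
qed

lemma cross_collinear:
  assumes "cross a b c \<noteq> 0"
  shows "\<not> collinear {a, b, c}"
proof
  assume "collinear {a, b, c}"
  then obtain w where w: "\<forall>x\<in>{a,b,c}. \<forall>y\<in>{a,b,c}. \<exists>t. x - y = t *\<^sub>R w"
    unfolding collinear_def by blast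
  obtain s where s: "b - a = s *\<^sub>R w" using w by blast
  obtain t where t: "c - a = t *\<^sub>R w" using w by blast
  have "fst b - fst a = s * fst w" "snd b - snd a = s * snd w"
       "fst c - fst a = t * fst w" "snd c - snd a = t * snd w"
    using s t by (metis fst_diff fst_scaleR snd_diff snd_scaleR real_scaleR_def)+
  then have "cross a b c = 0" unfolding cross_def by simp
  then show False using assms by simp
qed


lemma H_seg_pt:
  assumes "a \<in> Delta" "b \<in> Delta" "k \<ge> 1" "0 \<le> t" "t \<le> 1"
  defines "da \<equiv> real k * (1 - snd a) + 1 - fst a"
  defines "db \<equiv> real k * (1 - snd b) + 1 - fst b"
  shows "H k ((1 - t) *\<^sub>R a + t *\<^sub>R b) = (1 - t*db/((1-t)*da+t*db)) *\<^sub>R H k a + (t*db/((1-t)*da+t*db)) *\<^sub>R H k b"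
proof -
  obtain a1 a2 where a: "a = (a1, a2)" by force
  obtain b1 b2 where b: "b = (b1, b2)" by force
  have da: "da \<ge> 1" using d_pos assms a da_def by auto
  have db: "db \<ge> 1" using d_pos assms b db_def by auto
  have D: "(1-t)*da+t*db > 0"
  proof -
    have "(1-t)*da \<ge> 0" "t*db \<ge> 0" using assms da db by auto
    moreover have "(1-t)*da > 0 \<or> t*db > 0" using assms da db
      by (cases "t = 1") auto
    ultimately show ?thesis by linarith
  qed
  have Dx: "real k * (1 - ((1 - t) * a2 + t * b2)) + 1 - ((1 - t) * a1 + t * b1) = (1-t)*da+t*db"
    unfolding da_def db_def a b by (simp add: algebra_simps)
  define D where "D = (1-t)*da+t*db"
  have Dp: "D > 0" using D D_def by simp
  have s1: "1 - t*db/D = (1-t)*da/D" using Dp unfolding D_def by (simp add: field_simps)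
  have e1: "(1-t)*da/D * (a2/da) = (1-t)*a2/D" "t*db/D * (b2/db) = t*b2/D"
           "(1-t)*da/D * ((1-a2)/da) = (1-t)*(1-a2)/D" "t*db/D * ((1-b2)/db) = t*(1-b2)/D"
    using da db by auto
  have ha: "H k a = (a2/da, (1-a2)/da)" unfolding a da_def by (simp add: H_eq)
  have hb: "H k b = (b2/db, (1-b2)/db)" unfolding b db_def by (simp add: H_eq)
  have hx: "H k ((1 - t) *\<^sub>R a + t *\<^sub>R b) = (((1-t)*a2+t*b2)/D, ((1-t)*(1-a2)+t*(1-b2))/D)"
    unfolding a b using Dx by (simp add: H_eq D_def algebra_simps)
  have c1: "(1-t)*da/D * (a2/da) + t*db/D * (b2/db) = ((1-t)*a2+t*b2)/D"
    using da db Dp by (simp add: field_simps)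
  have c2: "(1-t)*da/D * ((1-a2)/da) + t*db/D * ((1-b2)/db) = ((1-t)*(1-a2)+t*(1-b2))/D"
    using da db Dp by (simp add: field_simps)
  show ?thesis
    unfolding D_def[symmetric] s1 ha hb hx
    by (simp only: prod_eq_iff fst_add snd_add fst_scaleR snd_scaleR fst_conv snd_conv real_scaleR_def c1 c2)
qed

lemma H_seg:
  assumes "a \<in> Delta" "b \<in> Delta" "k \<ge> 1"
  shows "H k ` closed_segment a b = closed_segment (H k a) (H k b)"
proof -
  define da where "da = real k * (1 - snd a) + 1 - fst a"
  define db where "db = real k * (1 - snd b) + 1 - fst b"
  have da: "da \<ge> 1" using d_pos assms da_def by (metis prod.collapse)
  have db: "db \<ge> 1" using d_pos assms db_def by (metis prod.collapse)
  show ?thesis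
  proof
    show "H k ` closed_segment a b \<subseteq> closed_segment (H k a) (H k b)"
    proof
      fix y assume "y \<in> H k ` closed_segment a b"
      then obtain t where t: "0 \<le> t" "t \<le> 1" and y: "y = H k ((1 - t) *\<^sub>R a + t *\<^sub>R b)"
        unfolding closed_segment_def by blast
      define s where "s = t*db/((1-t)*da+t*db)"
      have D: "(1-t)*da+t*db > 0"
      proof -
        have "(1-t)*da \<ge> 0" "t*db \<ge> 0" using t da db by auto
        moreover have "(1-t)*da > 0 \<or> t*db > 0" using t da db
          by (cases "t = 1") auto
        ultimately show ?thesis by linarith
      qed
      have s0: "0 \<le> s" using t db D by (simp add: s_def)
      have s1: "s \<le> 1" using t da db D by (simp add: s_def field_simps)
      have "y = (1 - s) *\<^sub>R H k a + s *\<^sub>R H k b"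
        using H_seg_pt[OF assms t] y unfolding s_def da_def db_def by simp
      then show "y \<in> closed_segment (H k a) (H k b)"
        unfolding closed_segment_def using s0 s1 by blast
    qed
  next
    show "closed_segment (H k a) (H k b) \<subseteq> H k ` closed_segment a b"
    proof
      fix y assume "y \<in> closed_segment (H k a) (H k b)"
      then obtain s where s: "0 \<le> s" "s \<le> 1" and y: "y = (1 - s) *\<^sub>R H k a + s *\<^sub>R H k b"
        unfolding closed_segment_def by blast
      define E where "E = (1-s)*db + s*da"
      have E: "E > 0"
      proof -
        have "(1-s)*db \<ge> 0" "s*da \<ge> 0" using s da db by auto
        moreover have "(1-s)*db > 0 \<or> s*da > 0" using s da db
          by (cases "s = 1") auto
        ultimately show ?thesis unfolding E_def by linarith
      qed
      define t where "t = s*da/E"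
      have t0: "0 \<le> t" using s da E by (simp add: t_def)
      have t1: "t \<le> 1" using s da db E by (simp add: t_def E_def field_simps)
      have omt: "1 - t = (1-s)*db/E" using E unfolding t_def E_def by (simp add: field_simps)
      have DD: "(1-t)*da+t*db = da*db/E" unfolding omt t_def using E by (simp add: field_simps, simp add: E_def algebra_simps)
      have "t*db/((1-t)*da+t*db) = s"
      proof -
        have "t*db/((1-t)*da+t*db) = (s*da/E)*db/(da*db/E)" unfolding DD by (simp only: t_def)
        also have "\<dots> = s" using E da db by (simp add: field_simps)
        finally show ?thesis .
      qed
      then have "H k ((1 - t) *\<^sub>R a + t *\<^sub>R b) = y"
        using H_seg_pt[OF assms t0 t1] y unfolding da_def db_def by simp
      moreover have "(1 - t) *\<^sub>R a + t *\<^sub>R b \<in> closed_segment a b"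
        unfolding closed_segment_def using t0 t1 by blast
      ultimately show "y \<in> H k ` closed_segment a b" by blast
    qed
  qed
qed

lemma Hcomp_seg:
  assumes "\<forall>k\<in>set ks. k \<ge> 1" "a \<in> Delta" "b \<in> Delta"
  shows "Hcomp ks ` closed_segment a b = closed_segment (Hcomp ks a) (Hcomp ks b)"
  using assms
proof (induction ks)
  case Nil
  then show ?case by (simp add: Hcomp_Nil)
next
  case (Cons k ks)
  have "Hcomp (k # ks) ` closed_segment a b = H k ` (Hcomp ks ` closed_segment a b)"
    by (simp add: Hcomp_Cons image_comp)
  also have "\<dots> = H k ` closed_segment (Hcomp ks a) (Hcomp ks b)" using Cons by simp
  also have "\<dots> = closed_segment (Hcomp (k # ks) a) (Hcomp (k # ks) b)"
    using Cons H_seg Hcomp_Delta by (simp add: Hcomp_Cons)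
  finally show ?case .
qed


lemma Delta_alt: "Delta = {p. 0 \<le> fst p} \<inter> {p. 0 \<le> snd p} \<inter> {p. fst p + snd p \<le> 1}"
  by (auto simp: Delta_def)

lemma closed_Delta: "closed Delta"
  unfolding Delta_alt
  by (intro closed_Int closed_Collect_le continuous_intros)

lemma interior_Delta: "interior Delta = {p. 0 < fst p \<and> 0 < snd p \<and> fst p + snd p < 1}"
proof
  show "{p. 0 < fst p \<and> 0 < snd p \<and> fst p + snd p < 1} \<subseteq> interior Delta"
  proof (rule interior_maximal)
    show "{p. 0 < fst p \<and> 0 < snd p \<and> fst p + snd p < 1} \<subseteq> Delta"
      by (auto simp: Delta_def)
    have "{p. 0 < fst p \<and> 0 < snd p \<and> fst p + snd p < 1} =
          {p. 0 < fst p} \<inter> {p. 0 < snd p} \<inter> {p. fst p + snd p < (1::real)}" by auto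
    also have "open \<dots>"
      by (intro open_Int open_Collect_less continuous_intros)
    finally show "open {p. 0 < fst p \<and> 0 < snd p \<and> fst p + snd p < (1::real)}" .
  qed
next
  show "interior Delta \<subseteq> {p. 0 < fst p \<and> 0 < snd p \<and> fst p + snd p < 1}"
  proof
    fix p assume p: "p \<in> interior Delta"
    then obtain e where e: "e > 0" "ball p e \<subseteq> Delta" using mem_interior by blast
    obtain u v where puv: "p = (u, v)" by force
    have "(u - e/2, v) \<in> ball p e" using e puv by (simp add: dist_Pair_Pair dist_real_def)
    then have "(u - e/2, v) \<in> Delta" using e(2) by blast
    then have 1: "u - e/2 \<ge> 0" by (simp add: Delta_def)
    have "(u, v - e/2) \<in> ball p e" using e puv by (simp add: dist_Pair_Pair dist_real_def)
    then have "(u, v - e/2) \<in> Delta" using e(2) by blast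
    then have 2: "v - e/2 \<ge> 0" by (simp add: Delta_def)
    have "(u + e/2, v) \<in> ball p e" using e puv by (simp add: dist_Pair_Pair dist_real_def)
    then have "(u + e/2, v) \<in> Delta" using e(2) by blast
    then have 3: "u + e/2 + v \<le> 1" by (simp add: Delta_def)
    show "p \<in> {p. 0 < fst p \<and> 0 < snd p \<and> fst p + snd p < 1}"
      using 1 2 3 e puv by auto
  qed
qed

lemma seg1: "closed_segment (0::real, 0::real) (1, 0) = {p. snd p = 0 \<and> 0 \<le> fst p \<and> fst p \<le> 1}"
proof -
  have "p \<in> closed_segment (0::real, 0::real) (1, 0) \<longleftrightarrow> snd p = 0 \<and> 0 \<le> fst p \<and> fst p \<le> 1" for p
  proof
    assume "p \<in> closed_segment (0::real, 0::real) (1, 0)"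
    then obtain u where "0 \<le> u" "u \<le> 1" "p = (1 - u) *\<^sub>R (0::real, 0::real) + u *\<^sub>R (1, 0)"
      unfolding closed_segment_def by blast
    then show "snd p = 0 \<and> 0 \<le> fst p \<and> fst p \<le> 1" by simp
  next
    assume h: "snd p = 0 \<and> 0 \<le> fst p \<and> fst p \<le> 1"
    then have "p = (1 - fst p) *\<^sub>R (0::real, 0::real) + fst p *\<^sub>R (1, 0)"
      by (simp add: prod_eq_iff)
    then show "p \<in> closed_segment (0::real, 0::real) (1, 0)" unfolding closed_segment_def using h by blast
  qed
  then show ?thesis by blast
qed

lemma seg2: "closed_segment (1::real, 0::real) (0, 1) = {p. fst p + snd p = 1 \<and> 0 \<le> snd p \<and> snd p \<le> 1}"
proof -
  have "p \<in> closed_segment (1::real, 0::real) (0, 1) \<longleftrightarrow> fst p + snd p = 1 \<and> 0 \<le> snd p \<and> snd p \<le> 1" for p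
  proof
    assume "p \<in> closed_segment (1::real, 0::real) (0, 1)"
    then obtain u where "0 \<le> u" "u \<le> 1" "p = (1 - u) *\<^sub>R (1::real, 0::real) + u *\<^sub>R (0, 1)"
      unfolding closed_segment_def by blast
    then show "fst p + snd p = 1 \<and> 0 \<le> snd p \<and> snd p \<le> 1" by simp
  next
    assume h: "fst p + snd p = 1 \<and> 0 \<le> snd p \<and> snd p \<le> 1"
    then have "p = (1 - snd p) *\<^sub>R (1::real, 0::real) + snd p *\<^sub>R (0, 1)"
      by (simp add: prod_eq_iff)
    then show "p \<in> closed_segment (1::real, 0::real) (0, 1)" unfolding closed_segment_def using h by blast
  qed
  then show ?thesis by blast
qed

lemma seg3: "closed_segment (0::real, 1::real) (0, 0) = {p. fst p = 0 \<and> 0 \<le> snd p \<and> snd p \<le> 1}"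
proof -
  have "p \<in> closed_segment (0::real, 1::real) (0, 0) \<longleftrightarrow> fst p = 0 \<and> 0 \<le> snd p \<and> snd p \<le> 1" for p
  proof
    assume "p \<in> closed_segment (0::real, 1::real) (0, 0)"
    then obtain u where "0 \<le> u" "u \<le> 1" "p = (1 - u) *\<^sub>R (0::real, 1::real) + u *\<^sub>R (0, 0)"
      unfolding closed_segment_def by blast
    then show "fst p = 0 \<and> 0 \<le> snd p \<and> snd p \<le> 1" by simp
  next
    assume h: "fst p = 0 \<and> 0 \<le> snd p \<and> snd p \<le> 1"
    then have e: "p = (1 - (1 - snd p)) *\<^sub>R (0::real, 1::real) + (1 - snd p) *\<^sub>R (0, 0)"
      by (simp add: prod_eq_iff)
    have "0 \<le> 1 - snd p" "1 - snd p \<le> 1" using h by auto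
    then show "p \<in> closed_segment (0::real, 1::real) (0, 0)" unfolding closed_segment_def using e by blast
  qed
  then show ?thesis by blast
qed

lemma frontier_Delta:
  "frontier Delta = closed_segment (0, 0) (1, 0) \<union> closed_segment (1, 0) (0, 1) \<union> closed_segment (0, 1) (0, 0)"
proof -
  have "frontier Delta = Delta - interior Delta"
    unfolding frontier_def closure_closed[OF closed_Delta] ..
  also have "\<dots> = {p. snd p = 0 \<and> 0 \<le> fst p \<and> fst p \<le> 1} \<union> {p. fst p + snd p = 1 \<and> 0 \<le> snd p \<and> snd p \<le> 1}
     \<union> {p. fst p = 0 \<and> 0 \<le> snd p \<and> snd p \<le> 1}"
    unfolding interior_Delta by (auto simp: Delta_def)
  finally show ?thesis unfolding seg1 seg2 seg3 .
qed


definition onL :: "real \<times> real \<Rightarrow> real \<times> real \<Rightarrow> bool" where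
  "onL p q = (\<exists>\<alpha> \<beta>. \<alpha> \<ge> 1 \<and> \<beta> \<ge> 1 \<and> \<alpha> * fst p + \<beta> * snd p = 1 \<and> \<alpha> * fst q + \<beta> * snd q = 1)"

definition good' :: "real \<times> real \<Rightarrow> real \<times> real \<Rightarrow> bool" where
  "good' p q = (p \<noteq> q \<and> p \<in> Delta \<and> q \<in> Delta \<and> ((fst p = 0 \<and> fst q = 0) \<or> onL p q))"

definition good :: "real \<times> real \<Rightarrow> real \<times> real \<Rightarrow> bool" where
  "good p q = (p \<noteq> q \<and> p \<in> Delta \<and> q \<in> Delta \<and>
     ((fst p = 0 \<and> fst q = 0) \<or> (snd p = 0 \<and> snd q = 0) \<or> onL p q))"

lemma H_line:
  assumes "p \<in> Delta" "k \<ge> 1" "\<alpha> \<ge> 1" "\<alpha> * fst p + \<beta> * snd p = 1"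
  shows "((\<alpha> + \<beta> - 1) / \<alpha>) * fst (H k p) + ((real k + 1) * \<alpha> - 1) / \<alpha> * snd (H k p) = 1"
proof -
  obtain u v where p: "p = (u, v)" by force
  define d where "d = real k * (1 - v) + 1 - u"
  have d: "d \<ge> 1" using d_pos assms p d_def by blast
  have l: "\<alpha> * u = 1 - \<beta> * v" using assms p by simp
  have "\<alpha> * d = real k * \<alpha> * (1 - v) + \<alpha> - \<alpha> * u" by (simp add: d_def algebra_simps)
  also have "\<dots> = (\<alpha> + \<beta> - 1) * v + ((real k + 1) * \<alpha> - 1) * (1 - v)"
    unfolding l by (simp add: algebra_simps)
  finally have eq: "(\<alpha> + \<beta> - 1) * v + ((real k + 1) * \<alpha> - 1) * (1 - v) = \<alpha> * d" ..
  have "((\<alpha> + \<beta> - 1) / \<alpha>) * (v / d) + ((real k + 1) * \<alpha> - 1) / \<alpha> * ((1 - v) / d)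
        = ((\<alpha> + \<beta> - 1) * v + ((real k + 1) * \<alpha> - 1) * (1 - v)) / (\<alpha> * d)"
    using d assms(3) by (simp add: field_simps)
  also have "\<dots> = 1" unfolding eq using d assms(3) by simp
  finally show ?thesis unfolding p H_eq d_def[symmetric] by simp
qed

lemma H_x0:
  assumes "p \<in> Delta" "k \<ge> 1" "fst p = 0"
  shows "1 * fst (H k p) + (real k + 1) * snd (H k p) = 1"
proof -
  obtain v where p: "p = (0, v)" using assms by (metis prod.collapse)
  define d where "d = real k * (1 - v) + 1 - 0"
  have d: "d \<ge> 1" using d_pos assms p d_def by blast
  have "v / d + (real k + 1) * ((1 - v) / d) = (v + (real k + 1) * (1 - v)) / d"
    using d by (simp add: field_simps)
  also have "\<dots> = 1" using d by (simp add: d_def algebra_simps)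
  finally show ?thesis unfolding p H_eq d_def[symmetric] by simp
qed

lemma H_y0: "snd p = 0 \<Longrightarrow> fst (H k p) = 0"
  by (metis H_eq div_0 fst_conv prod.collapse)

lemma good_H:
  assumes "good p q" "k \<ge> 1"
  shows "good' (H k p) (H k q)"
proof -
  have pq: "p \<noteq> q" "p \<in> Delta" "q \<in> Delta" using assms by (auto simp: good_def)
  have ne: "H k p \<noteq> H k q" using H_inj pq assms(2) by blast
  have D: "H k p \<in> Delta" "H k q \<in> Delta" using H_Delta pq assms(2) by auto
  have "(fst (H k p) = 0 \<and> fst (H k q) = 0) \<or> onL (H k p) (H k q)"
  proof -
    consider "fst p = 0 \<and> fst q = 0" | "snd p = 0 \<and> snd q = 0" | "onL p q"
      using assms(1) by (auto simp: good_def)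
    then show ?thesis
    proof cases
      case 1
      have "real k + 1 \<ge> 1" by simp
      then have "onL (H k p) (H k q)" unfolding onL_def
        using H_x0[OF pq(2) assms(2)] H_x0[OF pq(3) assms(2)] 1 by (intro exI[of _ 1] exI[of _ "real k + 1"]) auto
      then show ?thesis ..
    next
      case 2
      then show ?thesis using H_y0 by blast
    next
      case 3
      then obtain \<alpha> \<beta> where ab: "\<alpha> \<ge> 1" "\<beta> \<ge> 1" "\<alpha> * fst p + \<beta> * snd p = 1" "\<alpha> * fst q + \<beta> * snd q = 1"
        unfolding onL_def by blast
      have a1: "(\<alpha> + \<beta> - 1) / \<alpha> \<ge> 1" using ab by (simp add: field_simps)
      have "real k * \<alpha> \<ge> 1 * 1" using ab assms(2) by (intro mult_mono) auto
      then have a2: "((real k + 1) * \<alpha> - 1) / \<alpha> \<ge> 1" using ab by (simp add: field_simps)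
      have "onL (H k p) (H k q)" unfolding onL_def
        using H_line[OF pq(2) assms(2) ab(1) ab(3)] H_line[OF pq(3) assms(2) ab(1) ab(4)] a1 a2 by blast
      then show ?thesis ..
    qed
  qed
  then show ?thesis unfolding good'_def using ne D by blast
qed

lemma good'_good: "good' p q \<Longrightarrow> good p q"
  unfolding good'_def good_def by blast

lemma good'_neg_slope:
  assumes "good' p q"
  shows "neg_slope p q"
proof -
  have ne: "p \<noteq> q" using assms by (simp add: good'_def)
  consider "fst p = 0 \<and> fst q = 0" | "onL p q" using assms by (auto simp: good'_def)
  then show ?thesis
  proof cases
    case 1
    then have "snd p \<noteq> snd q" using ne by (metis prod.collapse)
    then show ?thesis using 1 by (simp add: neg_slope_def)
  next
    case 2
    then obtain \<alpha> \<beta> where ab: "\<alpha> \<ge> 1" "\<beta> \<ge> 1" "\<alpha> * fst p + \<beta> * snd p = 1" "\<alpha> * fst q + \<beta> * snd q = 1"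
      unfolding onL_def by blast
    have lin: "\<alpha> * (fst q - fst p) + \<beta> * (snd q - snd p) = 0" using ab by (simp add: algebra_simps)
    show ?thesis
    proof (cases "fst p = fst q")
      case True
      then have "\<beta> * (snd q - snd p) = 0" using lin by simp
      then have "snd q = snd p" using ab by simp
      then have False using True ne by (metis prod.collapse)
      then show ?thesis ..
    next
      case False
      then have nz: "fst q - fst p \<noteq> 0" by simp
      have "snd q - snd p = - (\<alpha> / \<beta>) * (fst q - fst p)" using lin ab by (simp add: field_simps)
      then have "(snd q - snd p) / (fst q - fst p) = - (\<alpha> / \<beta>)" using nz by simp
      moreover have "\<alpha> / \<beta> > 0" using ab by simp
      ultimately show ?thesis using False by (simp add: neg_slope_def)
    qed
  qed
qed

lemma good_Hcomp:
  assumes "\<forall>k\<in>set ks. k \<ge> 1" "good p q"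
  shows "good (Hcomp ks p) (Hcomp ks q)"
  using assms
proof (induction ks)
  case Nil
  then show ?case by (simp add: Hcomp_Nil)
next
  case (Cons k ks)
  then show ?case using good_H good'_good by (simp add: Hcomp_Cons)
qed

lemma cross_Hcomp:
  assumes "\<forall>k\<in>set ks. k \<ge> 1" "a \<in> Delta" "b \<in> Delta" "c \<in> Delta" "cross a b c \<noteq> 0"
  shows "cross (Hcomp ks a) (Hcomp ks b) (Hcomp ks c) \<noteq> 0"
  using assms
proof (induction ks)
  case Nil
  then show ?case by (simp add: Hcomp_Nil)
next
  case (Cons k ks)
  then show ?case using cross_H Hcomp_Delta by (simp add: Hcomp_Cons)
qed

theorem proposition3p5:
  fixes ks :: "nat list"
  assumes "ks \<noteq> []" and "\<forall>k\<in>set ks. k \<ge> 1"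
  shows "neg_slope_triangle_boundary (Hcomp ks ` frontier Delta)"
proof -
  obtain k ks' where ks: "ks = k # ks'" using assms(1) by (cases ks) auto
  have k: "k \<ge> 1" and ks': "\<forall>k\<in>set ks'. k \<ge> 1" using assms(2) ks by auto
  define A :: "real \<times> real" where "A = (0, 0)"
  define B :: "real \<times> real" where "B = (1, 0)"
  define C :: "real \<times> real" where "C = (0, 1)"
  have AD: "A \<in> Delta" and BD: "B \<in> Delta" and CD: "C \<in> Delta"
    by (auto simp: A_def B_def C_def Delta_def)
  have gAB: "good A B" and gBC: "good B C" and gCA: "good C A"
    using AD BD CD by (auto simp: good_def onL_def A_def B_def C_def)
  have cr: "cross A B C \<noteq> 0" by (simp add: cross_def A_def B_def C_def)
  have HC: "Hcomp ks x = H k (Hcomp ks' x)" for x by (simp add: ks Hcomp_Cons)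
  have img: "Hcomp ks ` frontier Delta =
     closed_segment (Hcomp ks A) (Hcomp ks B) \<union> closed_segment (Hcomp ks B) (Hcomp ks C)
     \<union> closed_segment (Hcomp ks C) (Hcomp ks A)"
    unfolding frontier_Delta image_Un A_def[symmetric] B_def[symmetric] C_def[symmetric]
    using Hcomp_seg[OF assms(2)] AD BD CD by simp
  have nc: "\<not> collinear {Hcomp ks A, Hcomp ks B, Hcomp ks C}"
    using cross_collinear cross_Hcomp[OF assms(2) AD BD CD cr] by blast
  have n1: "neg_slope (Hcomp ks A) (Hcomp ks B)"
    unfolding HC using good'_neg_slope good_H good_Hcomp[OF ks' gAB] k by blast
  have n2: "neg_slope (Hcomp ks B) (Hcomp ks C)"
    unfolding HC using good'_neg_slope good_H good_Hcomp[OF ks' gBC] k by blast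
  have n3: "neg_slope (Hcomp ks C) (Hcomp ks A)"
    unfolding HC using good'_neg_slope good_H good_Hcomp[OF ks' gCA] k by blast
  show ?thesis unfolding neg_slope_triangle_boundary_def
    using img nc n1 n2 n3 by blast
qed

end
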